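(* Let $\mathcal{C}$ be a category with finite products and an exponentiable parametrised natural numbers object $N$. (1) Every iterative midpoint object $(A,m)$ is a supermidpoint object under its associated infinitary operation $M$ (the unique $M\colon A^N\to A$ with $M_i\,x_i=m(x_0,M_i\,x_{i+1})$), and if $(A,m)$ is cancellative then so is this supermidpoint object. (2) Every cancellative supermidpoint object $(A,M)$ is an m-convex body under its associated binary operation $m(x,y)=M(x,y,y,y,\dots)$.
   Context: Equations are between generalised elements; $M_i\,x_i$ denotes $M((x_i))$. A midpoint object is $(A,m)$ with $m\colon A\times A\to A$ satisfying $m(x,x)=x$, $m(x,y)=m(y,x)$, $m(m(x,y),m(z,w))=m(m(x,z),m(y,w))$; it is cancellative if $m(x,y)=m(x,z)$ implies $y=z$; it is iterative if for every map $c\colon X\to A\times X$ there is a unique $u\colon X\to A$ with $m\circ(\mathrm{id}\times u)\circ c=u$. An m-convex body is a cancellative iterative midpoint object. A supermidpoint object is an object $A$ with $M\colon A^N\to A$ satisfying: $M(x,x,x,\dots)=x$; $M(x,y,y,y,\dots)=M(y,x,x,x,\dots)$; $M_i M_j\,x_{ij}=M_j M_i\,x_{ij}$; and $M_i\,x_i=M(x_0, M_i x_{i+1}, M_i x_{i+1},\dots)$. It is cancellative if the binary operation $m(x,y)=M(x,y,y,y,\dots)$ satisfies cancellation. *)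

theory Defs
  imports Main
begin

text \<open>A category is given by a set of objects, a set of arrows, domain/codomain,
identities and composition (ccomp g f means g after f).  The finite-product
structure (terminal object, binary products), the parametrised natural numbers
object N and the exponentials A^N are given as chosen data, and the axioms below
assert their universal properties (existence and uniqueness).\<close>

record ('o, 'a) fpcat =
  cOb   :: "'o set"
  cAr   :: "'a set"
  cdom  :: "'a \<Rightarrow> 'o"
  ccod  :: "'a \<Rightarrow> 'o"
  cid   :: "'o \<Rightarrow> 'a"
  ccomp :: "'a \<Rightarrow> 'a \<Rightarrow> 'a"
  cterm :: "'o"
  cbang :: "'o \<Rightarrow> 'a"
  cprod :: "'o \<Rightarrow> 'o \<Rightarrow> 'o"
  cpr1  :: "'o \<Rightarrow> 'o \<Rightarrow> 'a"
  cpr2  :: "'o \<Rightarrow> 'o \<Rightarrow> 'a"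
  cpair :: "'a \<Rightarrow> 'a \<Rightarrow> 'a"
  cnat  :: "'o"
  czero :: "'a"
  csucc :: "'a"
  crec  :: "'a \<Rightarrow> 'a \<Rightarrow> 'a"
  cexp  :: "'o \<Rightarrow> 'o"
  cev   :: "'o \<Rightarrow> 'a"
  clam  :: "'o \<Rightarrow> 'a \<Rightarrow> 'a"

definition arr :: "('o,'a) fpcat \<Rightarrow> 'o \<Rightarrow> 'o \<Rightarrow> 'a set" where
  "arr C X Y = {f \<in> cAr C. cdom C f = X \<and> ccod C f = Y}"

definition cross :: "('o,'a) fpcat \<Rightarrow> 'a \<Rightarrow> 'a \<Rightarrow> 'a" where
  "cross C f g = cpair C (ccomp C f (cpr1 C (cdom C f) (cdom C g)))
                         (ccomp C g (cpr2 C (cdom C f) (cdom C g)))"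

definition is_category :: "('o,'a) fpcat \<Rightarrow> bool" where
  "is_category C \<longleftrightarrow>
     (\<forall>f\<in>cAr C. cdom C f \<in> cOb C \<and> ccod C f \<in> cOb C) \<and>
     (\<forall>A\<in>cOb C. cid C A \<in> arr C A A) \<and>
     (\<forall>X\<in>cOb C. \<forall>Y\<in>cOb C. \<forall>Z\<in>cOb C. \<forall>f\<in>arr C X Y. \<forall>g\<in>arr C Y Z.
         ccomp C g f \<in> arr C X Z) \<and>
     (\<forall>X\<in>cOb C. \<forall>Y\<in>cOb C. \<forall>f\<in>arr C X Y.
         ccomp C (cid C Y) f = f \<and> ccomp C f (cid C X) = f) \<and>
     (\<forall>W\<in>cOb C. \<forall>X\<in>cOb C. \<forall>Y\<in>cOb C. \<forall>Z\<in>cOb C.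
       \<forall>f\<in>arr C W X. \<forall>g\<in>arr C X Y. \<forall>h\<in>arr C Y Z.
         ccomp C h (ccomp C g f) = ccomp C (ccomp C h g) f)"

definition has_terminal :: "('o,'a) fpcat \<Rightarrow> bool" where
  "has_terminal C \<longleftrightarrow> cterm C \<in> cOb C \<and>
     (\<forall>X\<in>cOb C. cbang C X \<in> arr C X (cterm C) \<and>
        (\<forall>f\<in>arr C X (cterm C). f = cbang C X))"

definition has_products :: "('o,'a) fpcat \<Rightarrow> bool" where
  "has_products C \<longleftrightarrow>
     (\<forall>A\<in>cOb C. \<forall>B\<in>cOb C.
        cprod C A B \<in> cOb C \<and>
        cpr1 C A B \<in> arr C (cprod C A B) A \<and>
        cpr2 C A B \<in> arr C (cprod C A B) B \<and>
        (\<forall>X\<in>cOb C. \<forall>f\<in>arr C X A. \<forall>g\<in>arr C X B.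
           cpair C f g \<in> arr C X (cprod C A B) \<and>
           ccomp C (cpr1 C A B) (cpair C f g) = f \<and>
           ccomp C (cpr2 C A B) (cpair C f g) = g) \<and>
        (\<forall>X\<in>cOb C. \<forall>h\<in>arr C X (cprod C A B).
           h = cpair C (ccomp C (cpr1 C A B) h) (ccomp C (cpr2 C A B) h)))"

definition has_param_nno :: "('o,'a) fpcat \<Rightarrow> bool" where
  "has_param_nno C \<longleftrightarrow>
     cnat C \<in> cOb C \<and> czero C \<in> arr C (cterm C) (cnat C) \<and>
     csucc C \<in> arr C (cnat C) (cnat C) \<and>
     (\<forall>X\<in>cOb C. \<forall>Y\<in>cOb C. \<forall>f\<in>arr C X Y. \<forall>g\<in>arr C Y Y.
        crec C f g \<in> arr C (cprod C X (cnat C)) Y \<and>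
        ccomp C (crec C f g) (cpair C (cid C X) (ccomp C (czero C) (cbang C X))) = f \<and>
        ccomp C (crec C f g) (cross C (cid C X) (csucc C)) = ccomp C g (crec C f g) \<and>
        (\<forall>h\<in>arr C (cprod C X (cnat C)) Y.
           ccomp C h (cpair C (cid C X) (ccomp C (czero C) (cbang C X))) = f \<and>
           ccomp C h (cross C (cid C X) (csucc C)) = ccomp C g h
           \<longrightarrow> h = crec C f g))"

definition nno_exponentiable :: "('o,'a) fpcat \<Rightarrow> bool" where
  "nno_exponentiable C \<longleftrightarrow>
     (\<forall>A\<in>cOb C.
        cexp C A \<in> cOb C \<and>
        cev C A \<in> arr C (cprod C (cexp C A) (cnat C)) A \<and>
        (\<forall>X\<in>cOb C. \<forall>f\<in>arr C (cprod C X (cnat C)) A.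
           clam C X f \<in> arr C X (cexp C A) \<and>
           ccomp C (cev C A) (cross C (clam C X f) (cid C (cnat C))) = f \<and>
           (\<forall>g\<in>arr C X (cexp C A).
              ccomp C (cev C A) (cross C g (cid C (cnat C))) = f \<longrightarrow> g = clam C X f)))"

definition fp_nno_cat :: "('o,'a) fpcat \<Rightarrow> bool" where
  "fp_nno_cat C \<longleftrightarrow> is_category C \<and> has_terminal C \<and> has_products C \<and>
     has_param_nno C \<and> nno_exponentiable C"

abbreviation mid :: "('o,'a) fpcat \<Rightarrow> 'a \<Rightarrow> 'a \<Rightarrow> 'a \<Rightarrow> 'a" where
  "mid C m x y \<equiv> ccomp C m (cpair C x y)"

definition midpoint_obj :: "('o,'a) fpcat \<Rightarrow> 'o \<Rightarrow> 'a \<Rightarrow> bool" where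
  "midpoint_obj C A m \<longleftrightarrow> A \<in> cOb C \<and> m \<in> arr C (cprod C A A) A \<and>
     (\<forall>X\<in>cOb C. \<forall>x\<in>arr C X A. \<forall>y\<in>arr C X A. \<forall>z\<in>arr C X A. \<forall>w\<in>arr C X A.
        mid C m x x = x \<and>
        mid C m x y = mid C m y x \<and>
        mid C m (mid C m x y) (mid C m z w) = mid C m (mid C m x z) (mid C m y w))"

definition cancellative :: "('o,'a) fpcat \<Rightarrow> 'o \<Rightarrow> 'a \<Rightarrow> bool" where
  "cancellative C A m \<longleftrightarrow>
     (\<forall>X\<in>cOb C. \<forall>x\<in>arr C X A. \<forall>y\<in>arr C X A. \<forall>z\<in>arr C X A.
        mid C m x y = mid C m x z \<longrightarrow> y = z)"

definition iterative :: "('o,'a) fpcat \<Rightarrow> 'o \<Rightarrow> 'a \<Rightarrow> bool" where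
  "iterative C A m \<longleftrightarrow>
     (\<forall>X\<in>cOb C. \<forall>c\<in>arr C X (cprod C A X).
        \<exists>!u. u \<in> arr C X A \<and> ccomp C m (ccomp C (cross C (cid C A) u) c) = u)"

definition iterative_midpoint :: "('o,'a) fpcat \<Rightarrow> 'o \<Rightarrow> 'a \<Rightarrow> bool" where
  "iterative_midpoint C A m \<longleftrightarrow> midpoint_obj C A m \<and> iterative C A m"

definition m_convex_body :: "('o,'a) fpcat \<Rightarrow> 'o \<Rightarrow> 'a \<Rightarrow> bool" where
  "m_convex_body C A m \<longleftrightarrow> midpoint_obj C A m \<and> cancellative C A m \<and> iterative C A m"

definition seq_const :: "('o,'a) fpcat \<Rightarrow> 'o \<Rightarrow> 'o \<Rightarrow> 'a \<Rightarrow> 'a" where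
  "seq_const C X A x = clam C X (ccomp C x (cpr1 C X (cnat C)))"

text \<open>The sequence (x,y,y,y,...) for x y : X \<rightarrow> A, defined by parametrised recursion
with state in A \<times> A: start at (x,y), step (a,b) \<mapsto> (b,b), output the first component.\<close>
definition seq_xy :: "('o,'a) fpcat \<Rightarrow> 'o \<Rightarrow> 'o \<Rightarrow> 'a \<Rightarrow> 'a \<Rightarrow> 'a" where
  "seq_xy C X A x y = clam C X (ccomp C (cpr1 C A A)
      (crec C (cpair C x y) (cpair C (cpr2 C A A) (cpr2 C A A))))"

definition seq_head :: "('o,'a) fpcat \<Rightarrow> 'o \<Rightarrow> 'o \<Rightarrow> 'a \<Rightarrow> 'a" where
  "seq_head C X A x = ccomp C (cev C A) (cpair C x (ccomp C (czero C) (cbang C X)))"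

definition seq_shift :: "('o,'a) fpcat \<Rightarrow> 'o \<Rightarrow> 'o \<Rightarrow> 'a \<Rightarrow> 'a" where
  "seq_shift C X A x = clam C X (ccomp C (cev C A) (cross C x (csucc C)))"

text \<open>For x : X \<rightarrow> (A^N)^N, the double sequence x_ij as a map (X \<times> N) \<times> N \<rightarrow> A
(first N-coordinate i, second j).\<close>
definition dseq :: "('o,'a) fpcat \<Rightarrow> 'o \<Rightarrow> 'a \<Rightarrow> 'a" where
  "dseq C A x = ccomp C (cev C A)
     (cross C (ccomp C (cev C (cexp C A)) (cross C x (cid C (cnat C)))) (cid C (cnat C)))"

definition swapN :: "('o,'a) fpcat \<Rightarrow> 'o \<Rightarrow> 'a" where
  "swapN C X = (let N = cnat C; XN = cprod C X N in
     cpair C (cpair C (ccomp C (cpr1 C X N) (cpr1 C XN N)) (cpr2 C XN N))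
             (ccomp C (cpr2 C X N) (cpr1 C XN N)))"

definition supermidpoint :: "('o,'a) fpcat \<Rightarrow> 'o \<Rightarrow> 'a \<Rightarrow> bool" where
  "supermidpoint C A M \<longleftrightarrow> A \<in> cOb C \<and> M \<in> arr C (cexp C A) A \<and>
     (\<forall>X\<in>cOb C.
        (\<forall>x\<in>arr C X A. ccomp C M (seq_const C X A x) = x) \<and>
        (\<forall>x\<in>arr C X A. \<forall>y\<in>arr C X A.
           ccomp C M (seq_xy C X A x y) = ccomp C M (seq_xy C X A y x)) \<and>
        (\<forall>x\<in>arr C X (cexp C (cexp C A)).
           ccomp C M (clam C X (ccomp C M (clam C (cprod C X (cnat C)) (dseq C A x)))) =
           ccomp C M (clam C X (ccomp C M (clam C (cprod C X (cnat C))
                                    (ccomp C (dseq C A x) (swapN C X)))))) \<and>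
        (\<forall>x\<in>arr C X (cexp C A).
           ccomp C M x = ccomp C M (seq_xy C X A (seq_head C X A x)
                                         (ccomp C M (seq_shift C X A x)))))"

definition supermid_binop :: "('o,'a) fpcat \<Rightarrow> 'o \<Rightarrow> 'a \<Rightarrow> 'a" where
  "supermid_binop C A M = ccomp C M (seq_xy C (cprod C A A) A (cpr1 C A A) (cpr2 C A A))"

definition cancellative_supermidpoint :: "('o,'a) fpcat \<Rightarrow> 'o \<Rightarrow> 'a \<Rightarrow> bool" where
  "cancellative_supermidpoint C A M \<longleftrightarrow>
     supermidpoint C A M \<and> cancellative C A (supermid_binop C A M)"

definition assoc_inf_op :: "('o,'a) fpcat \<Rightarrow> 'o \<Rightarrow> 'a \<Rightarrow> 'a \<Rightarrow> bool" where
  "assoc_inf_op C A m M \<longleftrightarrow> M \<in> arr C (cexp C A) A \<and>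
     (\<forall>X\<in>cOb C. \<forall>x\<in>arr C X (cexp C A).
        ccomp C M x = mid C m (seq_head C X A x) (ccomp C M (seq_shift C X A x)))"

end

theory Submission
  imports Defs
begin

locale fpc =
  fixes C :: "('o,'a) fpcat"
  assumes fp: "fp_nno_cat C"
begin

abbreviation "Ob \<equiv> cOb C"
abbreviation ar where "ar f \<equiv> f \<in> cAr C"
abbreviation "dm \<equiv> cdom C"
abbreviation "cd \<equiv> ccod C"
abbreviation comp (infixr "\<cdot>" 55) where "g \<cdot> f \<equiv> ccomp C g f"
abbreviation "idc \<equiv> cid C"
abbreviation "pair \<equiv> cpair C"
abbreviation "pr1 \<equiv> cpr1 C"
abbreviation "pr2 \<equiv> cpr2 C"
abbreviation "prd \<equiv> cprod C"
abbreviation "tm \<equiv> cterm C"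
abbreviation "bang \<equiv> cbang C"
abbreviation "NN \<equiv> cnat C"
abbreviation "zero \<equiv> czero C"
abbreviation "succ \<equiv> csucc C"
abbreviation "rec \<equiv> crec C"
abbreviation "ex \<equiv> cexp C"
abbreviation "ev \<equiv> cev C"
abbreviation "lam \<equiv> clam C"

lemma cat: "is_category C" and trm: "has_terminal C" and prods: "has_products C"
  and nno: "has_param_nno C" and expo: "nno_exponentiable C"
  using fp unfolding fp_nno_cat_def by auto

lemma arr_iff: "f \<in> arr C X Y \<longleftrightarrow> ar f \<and> dm f = X \<and> cd f = Y"
  by (simp add: arr_def)

lemma dom_ob[simp]: "ar f \<Longrightarrow> dm f \<in> Ob" and cod_ob[simp]: "ar f \<Longrightarrow> cd f \<in> Ob"
  using cat unfolding is_category_def by auto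

lemma cat_id: "A \<in> Ob \<Longrightarrow> idc A \<in> arr C A A"
  using cat[unfolded is_category_def, THEN conjunct2, THEN conjunct1] by blast

lemma cat_comp: "X \<in> Ob \<Longrightarrow> Y \<in> Ob \<Longrightarrow> Z \<in> Ob \<Longrightarrow> f \<in> arr C X Y \<Longrightarrow> g \<in> arr C Y Z \<Longrightarrow> g \<cdot> f \<in> arr C X Z"
  using cat[unfolded is_category_def, THEN conjunct2, THEN conjunct2, THEN conjunct1] by blast

lemma cat_idlr: "X \<in> Ob \<Longrightarrow> Y \<in> Ob \<Longrightarrow> f \<in> arr C X Y \<Longrightarrow> idc Y \<cdot> f = f \<and> f \<cdot> idc X = f"
  using cat[unfolded is_category_def, THEN conjunct2, THEN conjunct2, THEN conjunct2, THEN conjunct1] by blast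

lemma cat_assoc: "W \<in> Ob \<Longrightarrow> X \<in> Ob \<Longrightarrow> Y \<in> Ob \<Longrightarrow> Z \<in> Ob \<Longrightarrow> f \<in> arr C W X \<Longrightarrow> g \<in> arr C X Y \<Longrightarrow> h \<in> arr C Y Z \<Longrightarrow>
   h \<cdot> (g \<cdot> f) = (h \<cdot> g) \<cdot> f"
  using cat[unfolded is_category_def, THEN conjunct2, THEN conjunct2, THEN conjunct2, THEN conjunct2] by blast

lemma id_ar[simp]: "A \<in> Ob \<Longrightarrow> ar (idc A)" "A \<in> Ob \<Longrightarrow> dm (idc A) = A" "A \<in> Ob \<Longrightarrow> cd (idc A) = A"
  using cat_id unfolding arr_def by auto

lemma comp_ar[simp]:
  assumes "ar f" "ar g" "dm g = cd f"
  shows "ar (g \<cdot> f)" "dm (g \<cdot> f) = dm f" "cd (g \<cdot> f) = cd g"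
proof -
  have "g \<cdot> f \<in> arr C (dm f) (cd g)"
    using assms by (intro cat_comp[where Y="cd f"]) (auto simp: arr_def)
  then show "ar (g \<cdot> f)" "dm (g \<cdot> f) = dm f" "cd (g \<cdot> f) = cd g" by (auto simp: arr_def)
qed

lemma id_left[simp]: "ar f \<Longrightarrow> cd f = A \<Longrightarrow> idc A \<cdot> f = f"
  using cat_idlr[of "dm f" "cd f" f] by (auto simp: arr_def)

lemma id_right[simp]: "ar f \<Longrightarrow> dm f = A \<Longrightarrow> f \<cdot> idc A = f"
  using cat_idlr[of "dm f" "cd f" f] by (auto simp: arr_def)

lemma assoc[simp]:
  assumes "ar f" "ar g" "ar h" "dm g = cd f" "dm h = cd g"
  shows "(h \<cdot> g) \<cdot> f = h \<cdot> (g \<cdot> f)"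
  using cat_assoc[of "dm f" "cd f" "cd g" "cd h" f g h] assms by (auto simp: arr_def)

lemma prod_facts:
  assumes "A \<in> Ob" "B \<in> Ob"
  shows "prd A B \<in> Ob \<and> pr1 A B \<in> arr C (prd A B) A \<and> pr2 A B \<in> arr C (prd A B) B \<and>
        (\<forall>X\<in>Ob. \<forall>f\<in>arr C X A. \<forall>g\<in>arr C X B.
           pair f g \<in> arr C X (prd A B) \<and> pr1 A B \<cdot> pair f g = f \<and> pr2 A B \<cdot> pair f g = g) \<and>
        (\<forall>X\<in>Ob. \<forall>h\<in>arr C X (prd A B). h = pair (pr1 A B \<cdot> h) (pr2 A B \<cdot> h))"
  using prods assms unfolding has_products_def by blast

lemma prod_ob[simp]: "A \<in> Ob \<Longrightarrow> B \<in> Ob \<Longrightarrow> prd A B \<in> Ob"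
  using prod_facts by blast

lemma pr1_ar[simp]: "A \<in> Ob \<Longrightarrow> B \<in> Ob \<Longrightarrow> ar (pr1 A B)"
   "A \<in> Ob \<Longrightarrow> B \<in> Ob \<Longrightarrow> dm (pr1 A B) = prd A B"
   "A \<in> Ob \<Longrightarrow> B \<in> Ob \<Longrightarrow> cd (pr1 A B) = A"
  and pr2_ar[simp]: "A \<in> Ob \<Longrightarrow> B \<in> Ob \<Longrightarrow> ar (pr2 A B)"
   "A \<in> Ob \<Longrightarrow> B \<in> Ob \<Longrightarrow> dm (pr2 A B) = prd A B"
   "A \<in> Ob \<Longrightarrow> B \<in> Ob \<Longrightarrow> cd (pr2 A B) = B"
  using prod_facts unfolding arr_def by blast+

lemma pair_ar[simp]:
  assumes "ar f" "ar g" "dm f = dm g"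
  shows "ar (pair f g)" "dm (pair f g) = dm f" "cd (pair f g) = prd (cd f) (cd g)"
    "pr1 (cd f) (cd g) \<cdot> pair f g = f" "pr2 (cd f) (cd g) \<cdot> pair f g = g"
proof -
  have f: "f \<in> arr C (dm f) (cd f)" and g: "g \<in> arr C (dm f) (cd g)"
    using assms by (auto simp: arr_def)
  have P: "\<forall>X\<in>Ob. \<forall>u\<in>arr C X (cd f). \<forall>v\<in>arr C X (cd g).
           pair u v \<in> arr C X (prd (cd f) (cd g)) \<and> pr1 (cd f) (cd g) \<cdot> pair u v = u \<and> pr2 (cd f) (cd g) \<cdot> pair u v = v"
    using prod_facts[of "cd f" "cd g"] assms by simp
  have "pair f g \<in> arr C (dm f) (prd (cd f) (cd g)) \<and> pr1 (cd f) (cd g) \<cdot> pair f g = f \<and> pr2 (cd f) (cd g) \<cdot> pair f g = g"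
    using P[rule_format, OF _ f g] assms by simp
  then show "ar (pair f g)" "dm (pair f g) = dm f" "cd (pair f g) = prd (cd f) (cd g)"
    "pr1 (cd f) (cd g) \<cdot> pair f g = f" "pr2 (cd f) (cd g) \<cdot> pair f g = g"
    by (auto simp: arr_def)
qed

lemma pr1_pair[simp]: "ar f \<Longrightarrow> ar g \<Longrightarrow> dm f = dm g \<Longrightarrow> cd f = A \<Longrightarrow> cd g = B \<Longrightarrow> pr1 A B \<cdot> pair f g = f"
  and pr2_pair[simp]: "ar f \<Longrightarrow> ar g \<Longrightarrow> dm f = dm g \<Longrightarrow> cd f = A \<Longrightarrow> cd g = B \<Longrightarrow> pr2 A B \<cdot> pair f g = g"
  using pair_ar by blast+

lemma pair_eta:
  assumes "ar h" "cd h = prd A B" "A \<in> Ob" "B \<in> Ob"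
  shows "pair (pr1 A B \<cdot> h) (pr2 A B \<cdot> h) = h"
proof -
  have "h \<in> arr C (dm h) (prd A B)" using assms by (simp add: arr_def)
  then show ?thesis using prod_facts[OF assms(3,4)] assms(1) by (metis dom_ob)
qed

lemma pair_ext:
  assumes "ar h" "cd h = prd A B" "A \<in> Ob" "B \<in> Ob" "ar k" "cd k = prd A B"
    "pr1 A B \<cdot> h = pr1 A B \<cdot> k" "pr2 A B \<cdot> h = pr2 A B \<cdot> k"
  shows "h = k"
  by (metis assms pair_eta)

lemma pair_comp[simp]:
  assumes "ar f" "ar g" "dm f = dm g" "ar h" "cd h = dm f"
  shows "pair f g \<cdot> h = pair (f \<cdot> h) (g \<cdot> h)"
proof -
  have "pair f g \<cdot> h = pair (pr1 (cd f) (cd g) \<cdot> (pair f g \<cdot> h)) (pr2 (cd f) (cd g) \<cdot> (pair f g \<cdot> h))"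
    using assms by (intro pair_eta[symmetric]) auto
  also have "pr1 (cd f) (cd g) \<cdot> (pair f g \<cdot> h) = f \<cdot> h"
    using assms by (simp flip: assoc)
  also have "pr2 (cd f) (cd g) \<cdot> (pair f g \<cdot> h) = g \<cdot> h"
    using assms by (simp flip: assoc)
  finally show ?thesis .
qed

lemma pair_pr[simp]: "A \<in> Ob \<Longrightarrow> B \<in> Ob \<Longrightarrow> pair (pr1 A B) (pr2 A B) = idc (prd A B)"
  using pair_eta[of "idc (prd A B)" A B] by simp

lemma term_facts: "tm \<in> Ob \<and> (\<forall>X\<in>Ob. bang X \<in> arr C X tm \<and> (\<forall>f\<in>arr C X tm. f = bang X))"
  using trm unfolding has_terminal_def by blast

lemma term_ob[simp]: "tm \<in> Ob"
  using term_facts by blast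

lemma bang_ar[simp]: "X \<in> Ob \<Longrightarrow> ar (bang X)" "X \<in> Ob \<Longrightarrow> dm (bang X) = X" "X \<in> Ob \<Longrightarrow> cd (bang X) = tm"
  using term_facts unfolding arr_def by blast+

lemma bang_unique: "ar f \<Longrightarrow> cd f = tm \<Longrightarrow> f = bang (dm f)"
  using term_facts dom_ob unfolding arr_def by blast

lemma bang_comp[simp]: "ar h \<Longrightarrow> cd h = X \<Longrightarrow> bang X \<cdot> h = bang (dm h)"
  using bang_unique[of "bang X \<cdot> h"] by auto

lemma nno_facts: "NN \<in> Ob \<and> zero \<in> arr C tm NN \<and> succ \<in> arr C NN NN \<and>
     (\<forall>X\<in>Ob. \<forall>Y\<in>Ob. \<forall>f\<in>arr C X Y. \<forall>g\<in>arr C Y Y.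
        rec f g \<in> arr C (prd X NN) Y \<and>
        rec f g \<cdot> pair (idc X) (zero \<cdot> bang X) = f \<and>
        rec f g \<cdot> cross C (idc X) succ = g \<cdot> rec f g \<and>
        (\<forall>h\<in>arr C (prd X NN) Y.
           h \<cdot> pair (idc X) (zero \<cdot> bang X) = f \<and>
           h \<cdot> cross C (idc X) succ = g \<cdot> h
           \<longrightarrow> h = rec f g))"
  using nno unfolding has_param_nno_def by blast

lemma nat_ob[simp]: "NN \<in> Ob"
  and zero_ar[simp]: "ar zero" "dm zero = tm" "cd zero = NN"
  and succ_ar[simp]: "ar succ" "dm succ = NN" "cd succ = NN"
  using nno_facts unfolding arr_def by blast+

lemma cross_id_succ[simp]: "X \<in> Ob \<Longrightarrow> cross C (idc X) succ = pair (pr1 X NN) (succ \<cdot> pr2 X NN)"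
  unfolding cross_def by simp

lemma rec_facts:
  assumes "ar f" "ar g" "dm g = cd f" "cd g = cd f"
  shows "rec f g \<in> arr C (prd (dm f) NN) (cd f) \<and>
        rec f g \<cdot> pair (idc (dm f)) (zero \<cdot> bang (dm f)) = f \<and>
        rec f g \<cdot> pair (pr1 (dm f) NN) (succ \<cdot> pr2 (dm f) NN) = g \<cdot> rec f g \<and>
        (\<forall>h\<in>arr C (prd (dm f) NN) (cd f).
           h \<cdot> pair (idc (dm f)) (zero \<cdot> bang (dm f)) = f \<and>
           h \<cdot> pair (pr1 (dm f) NN) (succ \<cdot> pr2 (dm f) NN) = g \<cdot> h
           \<longrightarrow> h = rec f g)"
proof -
  have f: "f \<in> arr C (dm f) (cd f)" and g: "g \<in> arr C (cd f) (cd f)" using assms by (auto simp: arr_def)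
  show ?thesis using nno_facts[THEN conjunct2, THEN conjunct2, THEN conjunct2, rule_format, OF _ _ f g] assms
    by simp
qed

lemma rec_ar[simp]:
  assumes "ar f" "ar g" "dm g = cd f" "cd g = cd f"
  shows "ar (rec f g)" "dm (rec f g) = prd (dm f) NN" "cd (rec f g) = cd f"
  using rec_facts[OF assms] by (auto simp: arr_def)

lemma rec_zero[simp]:
  assumes "ar f" "ar g" "dm g = cd f" "cd g = cd f" "ar h" "cd h = dm f" "ar k" "cd k = tm" "dm k = dm h"
  shows "rec f g \<cdot> pair h (zero \<cdot> k) = f \<cdot> h"
proof -
  have e: "pair h (zero \<cdot> k) = pair (idc (dm f)) (zero \<cdot> bang (dm f)) \<cdot> h"
    using assms bang_unique[of k] by simp
  have "rec f g \<cdot> pair h (zero \<cdot> k) = rec f g \<cdot> (pair (idc (dm f)) (zero \<cdot> bang (dm f)) \<cdot> h)"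
    by (simp only: e)
  also have "\<dots> = (rec f g \<cdot> pair (idc (dm f)) (zero \<cdot> bang (dm f))) \<cdot> h"
    using assms by (intro assoc[symmetric]) auto
  also have "\<dots> = f \<cdot> h" using rec_facts[OF assms(1-4)] by simp
  finally show ?thesis .
qed

lemma rec_succ[simp]:
  assumes "ar f" "ar g" "dm g = cd f" "cd g = cd f" "ar h" "cd h = dm f" "ar k" "cd k = NN" "dm k = dm h"
  shows "rec f g \<cdot> pair h (succ \<cdot> k) = g \<cdot> (rec f g \<cdot> pair h k)"
proof -
  have e: "pair h (succ \<cdot> k) = pair (pr1 (dm f) NN) (succ \<cdot> pr2 (dm f) NN) \<cdot> pair h k"
    using assms by simp
  have "rec f g \<cdot> pair h (succ \<cdot> k) = rec f g \<cdot> (pair (pr1 (dm f) NN) (succ \<cdot> pr2 (dm f) NN) \<cdot> pair h k)"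
    by (simp only: e)
  also have "\<dots> = (rec f g \<cdot> pair (pr1 (dm f) NN) (succ \<cdot> pr2 (dm f) NN)) \<cdot> pair h k"
    using assms by (intro assoc[symmetric]) auto
  also have "\<dots> = (g \<cdot> rec f g) \<cdot> pair h k" using rec_facts[OF assms(1-4)] by simp
  also have "\<dots> = g \<cdot> (rec f g \<cdot> pair h k)" using assms by (intro assoc) auto
  finally show ?thesis .
qed

lemma rec_unique:
  assumes "ar f" "ar g" "dm g = cd f" "cd g = cd f" "ar h" "dm h = prd (dm f) NN" "cd h = cd f"
   "h \<cdot> pair (idc (dm f)) (zero \<cdot> bang (dm f)) = f"
   "h \<cdot> pair (pr1 (dm f) NN) (succ \<cdot> pr2 (dm f) NN) = g \<cdot> h"
  shows "h = rec f g"
  using rec_facts[OF assms(1-4)] assms(5-) by (auto simp: arr_def)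

lemma exp_facts:
  assumes "A \<in> Ob"
  shows "ex A \<in> Ob \<and> ev A \<in> arr C (prd (ex A) NN) A \<and>
        (\<forall>X\<in>Ob. \<forall>f\<in>arr C (prd X NN) A.
           lam X f \<in> arr C X (ex A) \<and>
           ev A \<cdot> cross C (lam X f) (idc NN) = f \<and>
           (\<forall>g\<in>arr C X (ex A). ev A \<cdot> cross C g (idc NN) = f \<longrightarrow> g = lam X f))"
  using expo assms unfolding nno_exponentiable_def by blast

lemma exp_ob[simp]: "A \<in> Ob \<Longrightarrow> ex A \<in> Ob"
  and ev_ar[simp]: "A \<in> Ob \<Longrightarrow> ar (ev A)" "A \<in> Ob \<Longrightarrow> dm (ev A) = prd (ex A) NN" "A \<in> Ob \<Longrightarrow> cd (ev A) = A"
  using exp_facts unfolding arr_def by blast+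

lemma cross_gid[simp]: "ar g \<Longrightarrow> cross C g (idc NN) = pair (g \<cdot> pr1 (dm g) NN) (pr2 (dm g) NN)"
  unfolding cross_def by simp

lemma lam_facts:
  assumes "ar f" "dm f = prd X NN" "X \<in> Ob"
  shows "lam X f \<in> arr C X (ex (cd f)) \<and>
           ev (cd f) \<cdot> pair (lam X f \<cdot> pr1 X NN) (pr2 X NN) = f \<and>
           (\<forall>g\<in>arr C X (ex (cd f)). ev (cd f) \<cdot> pair (g \<cdot> pr1 X NN) (pr2 X NN) = f \<longrightarrow> g = lam X f)"
proof -
  have f: "f \<in> arr C (prd X NN) (cd f)" using assms by (auto simp: arr_def)
  have co: "cd f \<in> Ob" using assms by simp
  have E: "lam X f \<in> arr C X (ex (cd f)) \<and>
           ev (cd f) \<cdot> cross C (lam X f) (idc NN) = f \<and>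
           (\<forall>g\<in>arr C X (ex (cd f)). ev (cd f) \<cdot> cross C g (idc NN) = f \<longrightarrow> g = lam X f)"
    using exp_facts[OF co, THEN conjunct2, THEN conjunct2] f assms(3) by blast
  have L: "lam X f \<in> arr C X (ex (cd f))" using E by blast
  have cr: "\<And>g. g \<in> arr C X (ex (cd f)) \<Longrightarrow> cross C g (idc NN) = pair (g \<cdot> pr1 X NN) (pr2 X NN)"
    by (simp add: arr_def)
  show ?thesis using E cr[OF L] cr by metis
qed

lemma lam_ar[simp]:
  assumes "ar f" "dm f = prd X NN" "X \<in> Ob"
  shows "ar (lam X f)" "dm (lam X f) = X" "cd (lam X f) = ex (cd f)"
  using lam_facts[OF assms] by (auto simp: arr_def)

lemma lam_unique:
  assumes "ar f" "dm f = prd X NN" "X \<in> Ob" "ar g" "dm g = X" "cd g = ex (cd f)"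
    "ev (cd f) \<cdot> pair (g \<cdot> pr1 X NN) (pr2 X NN) = f"
  shows "g = lam X f"
  using lam_facts[OF assms(1-3)] assms(4-) by (auto simp: arr_def)

lemma ev_lam[simp]:
  assumes "ar f" "dm f = prd X NN" "X \<in> Ob" "cd f = A" "ar h" "cd h = X" "ar k" "cd k = NN" "dm k = dm h"
  shows "ev A \<cdot> pair (lam X f \<cdot> h) k = f \<cdot> pair h k"
proof -
  have e: "pair (lam X f \<cdot> h) k = pair (lam X f \<cdot> pr1 X NN) (pr2 X NN) \<cdot> pair h k"
    using assms by simp
  have "ev A \<cdot> pair (lam X f \<cdot> h) k = ev A \<cdot> (pair (lam X f \<cdot> pr1 X NN) (pr2 X NN) \<cdot> pair h k)"
    by (simp only: e)
  also have "\<dots> = (ev A \<cdot> pair (lam X f \<cdot> pr1 X NN) (pr2 X NN)) \<cdot> pair h k"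
    using assms by (intro assoc[symmetric]) auto
  also have "\<dots> = f \<cdot> pair h k" using lam_facts[OF assms(1-3)] assms by simp
  finally show ?thesis .
qed

lemma ev_lam'[simp]:
  assumes "ar f" "dm f = prd X NN" "X \<in> Ob" "cd f = A" "ar k" "cd k = NN" "dm k = X"
  shows "ev A \<cdot> pair (lam X f) k = f \<cdot> pair (idc X) k"
  using ev_lam[of f X A "idc X" k] assms by simp

lemma lam_eta[simp]:
  assumes "ar g" "dm g = X" "cd g = ex A" "A \<in> Ob"
  shows "lam X (ev A \<cdot> pair (g \<cdot> pr1 X NN) (pr2 X NN)) = g"
  using assms by (intro lam_unique[symmetric]) auto

lemma lam_comp:
  assumes "ar f" "dm f = prd X NN" "X \<in> Ob" "ar h" "cd h = X"
  shows "lam X f \<cdot> h = lam (dm h) (f \<cdot> pair (h \<cdot> pr1 (dm h) NN) (pr2 (dm h) NN))"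
  using assms by (intro lam_unique) auto

lemma lam_inj:
  assumes "ar f" "dm f = prd X NN" "X \<in> Ob" "ar g" "dm g = prd X NN" "cd f = cd g"
  shows "lam X f = lam X g \<longleftrightarrow> f = g"
  by (metis assms lam_facts)

end

context fpc
begin

declare cross_def[simp]

lemma ar_iffD: "f \<in> arr C X Y \<Longrightarrow> ar f \<and> dm f = X \<and> cd f = Y"
  by (simp add: arr_def)

lemma NN_ext:
  assumes p: "ar p" "dm p = prd X NN" and q: "ar q" "dm q = prd X NN" "cd q = cd p" and X: "X \<in> Ob"
    and z: "p \<cdot> pair (idc X) (zero \<cdot> bang X) = q \<cdot> pair (idc X) (zero \<cdot> bang X)"
    and s: "p \<cdot> pair (pr1 X NN) (succ \<cdot> pr2 X NN) = q \<cdot> pair (pr1 X NN) (succ \<cdot> pr2 X NN)"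
  shows "p = q"
proof -
  define Z where "Z = prd X NN"
  define Y where "Y = cd p"
  define D where "D = pair (pr1 X NN) (succ \<cdot> pr2 X NN)"
  define b where "b = pair (p \<cdot> pair (idc X) (zero \<cdot> bang X)) (pair (idc X) (zero \<cdot> bang X))"
  define t where "t = pair (p \<cdot> D \<cdot> pr2 Y Z) (D \<cdot> pr2 Y Z)"
  have Yo: "Y \<in> Ob" unfolding Y_def using p by simp
  have D: "ar D" "dm D = Z" "cd D = Z" unfolding D_def Z_def using X by auto
  have b: "ar b" "dm b = X" "cd b = prd Y Z" unfolding b_def Y_def Z_def using p X by auto
  have t: "ar t" "dm t = prd Y Z" "cd t = prd Y Z" unfolding t_def Y_def using p X D Yo by (auto simp: Z_def)
  have P: "pair p (idc Z) = rec b t"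
    apply (rule rec_unique)
    using p X b t D Yo
    by (auto simp: Y_def Z_def b_def t_def D_def)
  have Q: "pair q (idc Z) = rec b t"
    apply (rule rec_unique)
    using p q X b t D Yo z s
    by (auto simp: Y_def Z_def b_def t_def D_def)
  have "p = pr1 Y Z \<cdot> pair p (idc Z)" using p X by (simp add: Y_def Z_def)
  also have "\<dots> = pr1 Y Z \<cdot> pair q (idc Z)" using P Q by simp
  also have "\<dots> = q" using q X by (simp add: Y_def Z_def)
  finally show ?thesis .
qed

definition Sq where "Sq B a b = pr1 B B \<cdot> rec (pair a b) (pair (pr2 B B) (pr2 B B))"

lemma rec_const:
  assumes "ar b" "dm b = X"
  shows "rec b (idc (cd b)) = b \<cdot> pr1 X NN"
  using assms by (intro rec_unique[symmetric]) auto

lemma Sq_pr2: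
  assumes "ar a" "ar b" "dm a = dm b" "cd a = B" "cd b = B"
  shows "pr2 B B \<cdot> rec (pair a b) (pair (pr2 B B) (pr2 B B)) = b \<cdot> pr1 (dm a) NN"
proof -
  have "pr2 B B \<cdot> rec (pair a b) (pair (pr2 B B) (pr2 B B)) = rec b (idc (cd b))"
    using assms by (intro rec_unique) auto
  then show ?thesis using rec_const[of b "dm a"] assms by simp
qed

lemma Sq_ar[simp]:
  assumes "ar a" "ar b" "dm a = dm b" "cd a = B" "cd b = B"
  shows "ar (Sq B a b)" "dm (Sq B a b) = prd (dm a) NN" "cd (Sq B a b) = B"
  using assms by (auto simp: Sq_def)

lemma Sq_zero[simp]:
  assumes "ar a" "ar b" "dm a = dm b" "cd a = B" "cd b = B" "ar h" "cd h = dm a" "ar k" "cd k = tm" "dm k = dm h"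
  shows "Sq B a b \<cdot> pair h (zero \<cdot> k) = a \<cdot> h"
  using assms cod_ob[OF assms(1)] dom_ob[OF assms(1)] by (simp add: Sq_def)

lemma Sq_succ[simp]:
  assumes "ar a" "ar b" "dm a = dm b" "cd a = B" "cd b = B" "ar h" "cd h = dm a" "ar k" "cd k = NN" "dm k = dm h"
  shows "Sq B a b \<cdot> pair h (succ \<cdot> k) = b \<cdot> h"
proof -
  have "Sq B a b \<cdot> pair h (succ \<cdot> k) = pr2 B B \<cdot> rec (pair a b) (pair (pr2 B B) (pr2 B B)) \<cdot> pair h k"
    using assms cod_ob[OF assms(1)] dom_ob[OF assms(1)] by (simp add: Sq_def)
  also have "\<dots> = (pr2 B B \<cdot> rec (pair a b) (pair (pr2 B B) (pr2 B B))) \<cdot> pair h k"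
    using assms cod_ob[OF assms(1)] dom_ob[OF assms(1)] by simp
  also have "\<dots> = b \<cdot> h" using assms cod_ob[OF assms(1)] dom_ob[OF assms(1)] by (simp add: Sq_pr2)
  finally show ?thesis .
qed

lemma seq_xy_eq[simp]: "seq_xy C X A x y = lam X (Sq A x y)"
  by (simp add: seq_xy_def Sq_def)

lemma seq_head_eq[simp]: "seq_head C X A x = ev A \<cdot> pair x (zero \<cdot> bang X)"
  by (simp add: seq_head_def)

lemma seq_shift_eq[simp]: "ar x \<Longrightarrow> dm x = X \<Longrightarrow> seq_shift C X A x = lam X (ev A \<cdot> pair (x \<cdot> pr1 X NN) (succ \<cdot> pr2 X NN))"
  by (simp add: seq_shift_def)

lemma seq_const_eq[simp]: "seq_const C X A x = lam X (x \<cdot> pr1 X NN)"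
  by (simp add: seq_const_def)

declare lam_comp[simp]

lemma dseq_eq: "ar x \<Longrightarrow> dm x = X \<Longrightarrow> X \<in> Ob \<Longrightarrow> A \<in> Ob \<Longrightarrow> cd x = ex (ex A) \<Longrightarrow>
  dseq C A x = ev A \<cdot> pair ((ev (ex A) \<cdot> pair (x \<cdot> pr1 X NN) (pr2 X NN)) \<cdot> pr1 (prd X NN) NN) (pr2 (prd X NN) NN)"
  by (simp add: dseq_def)

lemma swapN_eq: "swapN C X = pair (pair (pr1 X NN \<cdot> pr1 (prd X NN) NN) (pr2 (prd X NN) NN)) (pr2 X NN \<cdot> pr1 (prd X NN) NN)"
  by (simp add: swapN_def Let_def)

lemma
  assumes "ar x" "ar y" "dm x = X" "dm y = X" "cd x = A" "cd y = A" "X \<in> Ob" "A \<in> Ob"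
  shows "seq_head C X A (seq_xy C X A x y) = x"
    "seq_shift C X A (seq_xy C X A x y) = seq_const C X A y"
    "seq_head C X A (seq_const C X A y) = y"
    "seq_shift C X A (seq_const C X A y) = seq_const C X A y"
  using assms by simp_all

end

context fpc
begin

lemma mp_facts:
  assumes "midpoint_obj C A m"
  shows "A \<in> Ob" "ar m" "dm m = prd A A" "cd m = A"
  using assms unfolding midpoint_obj_def arr_def by auto

lemma mp_laws:
  assumes "midpoint_obj C A m" "ar x" "cd x = A" "ar y" "cd y = A" "ar z" "cd z = A" "ar w" "cd w = A"
    "dm y = dm x" "dm z = dm x" "dm w = dm x"
  shows "m \<cdot> pair x x = x" "m \<cdot> pair x y = m \<cdot> pair y x"
    "m \<cdot> pair (m \<cdot> pair x y) (m \<cdot> pair z w) = m \<cdot> pair (m \<cdot> pair x z) (m \<cdot> pair y w)"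
proof -
  have L: "\<forall>X\<in>Ob. \<forall>x\<in>arr C X A. \<forall>y\<in>arr C X A. \<forall>z\<in>arr C X A. \<forall>w\<in>arr C X A.
        m \<cdot> pair x x = x \<and> m \<cdot> pair x y = m \<cdot> pair y x \<and>
        m \<cdot> pair (m \<cdot> pair x y) (m \<cdot> pair z w) = m \<cdot> pair (m \<cdot> pair x z) (m \<cdot> pair y w)"
    using assms(1) unfolding midpoint_obj_def by blast
  have X: "dm x \<in> Ob" using assms by simp
  have "x \<in> arr C (dm x) A" "y \<in> arr C (dm x) A" "z \<in> arr C (dm x) A" "w \<in> arr C (dm x) A"
    using assms by (auto simp: arr_def)
  note L[rule_format, OF X this]
  then show "m \<cdot> pair x x = x" "m \<cdot> pair x y = m \<cdot> pair y x"
    "m \<cdot> pair (m \<cdot> pair x y) (m \<cdot> pair z w) = m \<cdot> pair (m \<cdot> pair x z) (m \<cdot> pair y w)" by blast+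
qed

lemma iter_unique:
  assumes mp: "midpoint_obj C A m" and it: "iterative C A m"
    and a: "ar a" "dm a = Z" "cd a = A" and e: "ar e" "dm e = Z" "cd e = Z" and Z: "Z \<in> Ob"
    and u1: "ar u1" "dm u1 = Z" "cd u1 = A" "m \<cdot> pair a (u1 \<cdot> e) = u1"
    and u2: "ar u2" "dm u2 = Z" "cd u2 = A" "m \<cdot> pair a (u2 \<cdot> e) = u2"
  shows "u1 = u2"
proof -
  note mf = mp_facts[OF mp]
  have c: "pair a e \<in> arr C Z (prd A Z)" using a e mf by (auto simp: arr_def)
  have E: "\<exists>!u. u \<in> arr C Z A \<and> m \<cdot> (cross C (idc A) u \<cdot> pair a e) = u"
    using it c Z unfolding iterative_def by blast
  have "\<And>u. ar u \<Longrightarrow> dm u = Z \<Longrightarrow> cd u = A \<Longrightarrow> m \<cdot> (cross C (idc A) u \<cdot> pair a e) = m \<cdot> pair a (u \<cdot> e)"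
    using a e mf Z by simp
  then have "u1 \<in> arr C Z A \<and> m \<cdot> (cross C (idc A) u1 \<cdot> pair a e) = u1"
     "u2 \<in> arr C Z A \<and> m \<cdot> (cross C (idc A) u2 \<cdot> pair a e) = u2"
    using u1 u2 by (auto simp: arr_def)
  then show ?thesis using E by blast
qed

lemma iter_exists:
  assumes mp: "midpoint_obj C A m" and it: "iterative C A m"
    and a: "ar a" "dm a = Z" "cd a = A" and e: "ar e" "dm e = Z" "cd e = Z" and Z: "Z \<in> Ob"
  obtains u where "ar u" "dm u = Z" "cd u = A" "m \<cdot> pair a (u \<cdot> e) = u"
proof -
  note mf = mp_facts[OF mp]
  have c: "pair a e \<in> arr C Z (prd A Z)" using a e mf by (auto simp: arr_def)
  obtain u where u: "u \<in> arr C Z A" "m \<cdot> (cross C (idc A) u \<cdot> pair a e) = u"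
    using it c Z unfolding iterative_def by blast
  have "m \<cdot> (cross C (idc A) u \<cdot> pair a e) = m \<cdot> pair a (u \<cdot> e)"
    using a e mf Z u(1) by (simp add: arr_def)
  then show ?thesis using that u by (auto simp: arr_def)
qed

lemma assoc_eq:
  assumes "assoc_inf_op C A m M" "ar x" "dm x = X" "cd x = ex A" "X \<in> Ob"
  shows "M \<cdot> x = m \<cdot> pair (ev A \<cdot> pair x (zero \<cdot> bang X)) (M \<cdot> lam X (ev A \<cdot> pair (x \<cdot> pr1 X NN) (succ \<cdot> pr2 X NN)))"
proof -
  have "x \<in> arr C X (ex A)" using assms by (simp add: arr_def)
  then show ?thesis using assms(1,2,3,5) unfolding assoc_inf_op_def by simp
qed

lemma assoc_M: "assoc_inf_op C A m M \<Longrightarrow> ar M \<and> dm M = ex A \<and> cd M = A"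
  unfolding assoc_inf_op_def arr_def by auto

lemma assoc_lam:
  assumes "assoc_inf_op C A m M" "midpoint_obj C A m" "ar f" "dm f = prd X NN" "cd f = A" "X \<in> Ob"
  shows "M \<cdot> lam X f = m \<cdot> pair (f \<cdot> pair (idc X) (zero \<cdot> bang X)) (M \<cdot> lam X (f \<cdot> pair (pr1 X NN) (succ \<cdot> pr2 X NN)))"
  using assoc_eq[OF assms(1), of "lam X f" X] assms mp_facts[OF assms(2)] by simp

lemma assoc_lam2:
  assumes "assoc_inf_op C A m M" "midpoint_obj C A m" "ar f" "dm f = prd X NN" "cd f = A" "X \<in> Ob"
    "f \<cdot> pair (idc X) (zero \<cdot> bang X) = h0" "f \<cdot> pair (pr1 X NN) (succ \<cdot> pr2 X NN) = f'"
  shows "M \<cdot> lam X f = m \<cdot> pair h0 (M \<cdot> lam X f')"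
  using assoc_lam[OF assms(1-6)] assms(7,8) by simp

context
  fixes A m M
  assumes mp: "midpoint_obj C A m" and it: "iterative C A m" and as: "assoc_inf_op C A m M"
begin

lemma mf: "A \<in> Ob" "ar m" "dm m = prd A A" "cd m = A"
  using mp_facts[OF mp] by auto

lemma Mf: "ar M" "dm M = ex A" "cd M = A"
  using assoc_M[OF as] by auto

lemma P1_const:
  assumes "ar x" "dm x = X" "cd x = A" "X \<in> Ob"
  shows "M \<cdot> lam X (x \<cdot> pr1 X NN) = x"
proof -
  have 1: "m \<cdot> pair x (x \<cdot> idc X) = x" using assms mp_laws(1)[OF mp, of x x x x] by simp
  have f1: "M \<cdot> lam X (x \<cdot> pr1 X NN) = m \<cdot> pair x (M \<cdot> lam X (x \<cdot> pr1 X NN))"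
    by (rule assoc_lam2[OF as mp]) (use assms mf in simp_all)
  have f2: "(M \<cdot> lam X (x \<cdot> pr1 X NN)) \<cdot> idc X = M \<cdot> lam X (x \<cdot> pr1 X NN)"
    using assms mf Mf by simp
  have 2: "m \<cdot> pair x ((M \<cdot> lam X (x \<cdot> pr1 X NN)) \<cdot> idc X) = M \<cdot> lam X (x \<cdot> pr1 X NN)"
    by (subst f2) (rule f1[symmetric])
  show ?thesis
    by (rule iter_unique[OF mp it, of x X "idc X"]) (use assms mf Mf 1 2 in auto)
qed

lemma P1_xy:
  assumes "ar x" "dm x = X" "cd x = A" "ar y" "dm y = X" "cd y = A" "X \<in> Ob"
  shows "M \<cdot> lam X (Sq A x y) = m \<cdot> pair x y"
proof -
  have "M \<cdot> lam X (Sq A x y) = m \<cdot> pair x (M \<cdot> lam X (y \<cdot> pr1 X NN))"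
    by (rule assoc_lam2[OF as mp]) (use assms mf in simp_all)
  then show ?thesis using P1_const[OF assms(4-7)] by simp
qed

lemma mp_idem: "ar x \<Longrightarrow> cd x = A \<Longrightarrow> m \<cdot> pair x x = x"
  using mp_laws(1)[OF mp, of x x x x] by simp

lemma mp_comm: "ar x \<Longrightarrow> cd x = A \<Longrightarrow> ar y \<Longrightarrow> cd y = A \<Longrightarrow> dm y = dm x \<Longrightarrow> m \<cdot> pair x y = m \<cdot> pair y x"
  using mp_laws(2)[OF mp, of x y x x] by simp

lemma mp_medial: "ar x \<Longrightarrow> cd x = A \<Longrightarrow> ar y \<Longrightarrow> cd y = A \<Longrightarrow> ar z \<Longrightarrow> cd z = A \<Longrightarrow> ar w \<Longrightarrow> cd w = A \<Longrightarrow>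
  dm y = dm x \<Longrightarrow> dm z = dm x \<Longrightarrow> dm w = dm x \<Longrightarrow>
  m \<cdot> pair (m \<cdot> pair x y) (m \<cdot> pair z w) = m \<cdot> pair (m \<cdot> pair x z) (m \<cdot> pair y w)"
  using mp_laws(3)[OF mp, of x y z w] by simp

lemma P1_medial_univ:
  defines "U \<equiv> ex A"
  defines "Z \<equiv> prd U U"
  defines "p0 \<equiv> ev A \<cdot> pair (pr1 U U \<cdot> pr1 Z NN) (pr2 Z NN)"
  defines "q0 \<equiv> ev A \<cdot> pair (pr2 U U \<cdot> pr1 Z NN) (pr2 Z NN)"
  shows "M \<cdot> lam Z (m \<cdot> pair p0 q0) = m \<cdot> pair (M \<cdot> pr1 U U) (M \<cdot> pr2 U U)"
proof -
  note mf Mf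
  have U: "U \<in> Ob" "Z \<in> Ob" unfolding U_def Z_def using mf by auto
  define sh where "sh = lam U (ev A \<cdot> pair (pr1 U NN) (succ \<cdot> pr2 U NN))"
  define e where "e = pair (sh \<cdot> pr1 U U) (sh \<cdot> pr2 U U)"
  define a where "a = m \<cdot> pair (ev A \<cdot> pair (pr1 U U) (zero \<cdot> bang Z)) (ev A \<cdot> pair (pr2 U U) (zero \<cdot> bang Z))"
  have sh: "ar sh" "dm sh = U" "cd sh = U" unfolding sh_def using U mf by (auto simp: U_def)
  have e: "ar e" "dm e = Z" "cd e = Z" unfolding e_def using U sh by (auto simp: Z_def)
  have a: "ar a" "dm a = Z" "cd a = A" unfolding a_def using U mf by (auto simp: Z_def U_def)
  have p0: "ar p0" "dm p0 = prd Z NN" "cd p0 = A" unfolding p0_def using U mf by (auto simp: Z_def U_def)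
  have q0: "ar q0" "dm q0 = prd Z NN" "cd q0 = A" unfolding q0_def using U mf by (auto simp: Z_def U_def)
  define F1 where "F1 = M \<cdot> lam Z (m \<cdot> pair p0 q0)"
  define F2 where "F2 = m \<cdot> pair (M \<cdot> pr1 U U) (M \<cdot> pr2 U U)"
  have F1: "ar F1" "dm F1 = Z" "cd F1 = A" unfolding F1_def using U mf Mf p0 q0 by (auto simp: U_def)
  have F2: "ar F2" "dm F2 = Z" "cd F2 = A" unfolding F2_def using U mf Mf by (auto simp: U_def Z_def)
  have "F1 = m \<cdot> pair a (M \<cdot> lam Z ((m \<cdot> pair p0 q0) \<cdot> pair (pr1 Z NN) (succ \<cdot> pr2 Z NN)))"
    unfolding F1_def
    by (rule assoc_lam2[OF as mp]) (use U mf Mf p0 q0 in \<open>simp_all add: a_def p0_def q0_def Z_def U_def\<close>)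
  also have "M \<cdot> lam Z ((m \<cdot> pair p0 q0) \<cdot> pair (pr1 Z NN) (succ \<cdot> pr2 Z NN)) = F1 \<cdot> e"
    unfolding F1_def using U mf Mf p0 q0 e by (simp add: e_def sh_def p0_def q0_def Z_def U_def)
  finally have F1e: "F1 = m \<cdot> pair a (F1 \<cdot> e)" .
  have A1: "M \<cdot> pr1 U U = m \<cdot> pair (ev A \<cdot> pair (pr1 U U) (zero \<cdot> bang Z)) (M \<cdot> (sh \<cdot> pr1 U U))"
    using assoc_eq[OF as, of "pr1 U U" Z] U mf Mf by (simp add: sh_def Z_def U_def)
  have A2: "M \<cdot> pr2 U U = m \<cdot> pair (ev A \<cdot> pair (pr2 U U) (zero \<cdot> bang Z)) (M \<cdot> (sh \<cdot> pr2 U U))"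
    using assoc_eq[OF as, of "pr2 U U" Z] U mf Mf by (simp add: sh_def Z_def U_def)
  have "F2 = m \<cdot> pair (m \<cdot> pair (ev A \<cdot> pair (pr1 U U) (zero \<cdot> bang Z)) (M \<cdot> (sh \<cdot> pr1 U U)))
                       (m \<cdot> pair (ev A \<cdot> pair (pr2 U U) (zero \<cdot> bang Z)) (M \<cdot> (sh \<cdot> pr2 U U)))"
    unfolding F2_def by (subst A1, subst A2, rule refl)
  also have "\<dots> = m \<cdot> pair a (m \<cdot> pair (M \<cdot> (sh \<cdot> pr1 U U)) (M \<cdot> (sh \<cdot> pr2 U U)))"
    unfolding a_def by (rule mp_medial) (use U mf Mf sh in \<open>simp_all add: Z_def U_def\<close>)
  also have "m \<cdot> pair (M \<cdot> (sh \<cdot> pr1 U U)) (M \<cdot> (sh \<cdot> pr2 U U)) = F2 \<cdot> e"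
    unfolding F2_def e_def using U mf Mf sh by (simp add: Z_def U_def)
  finally have F2e: "F2 = m \<cdot> pair a (F2 \<cdot> e)" .
  have "F1 = F2" by (rule iter_unique[OF mp it a e U(2) F1 F1e[symmetric] F2 F2e[symmetric]])
  then show ?thesis unfolding F1_def F2_def .
qed

lemma P1_medial:
  assumes "ar p" "dm p = prd X NN" "cd p = A" "ar q" "dm q = prd X NN" "cd q = A" "X \<in> Ob"
  shows "M \<cdot> lam X (m \<cdot> pair p q) = m \<cdot> pair (M \<cdot> lam X p) (M \<cdot> lam X q)"
proof -
  define U where "U = ex A"
  define Z where "Z = prd U U"
  have U: "U \<in> Ob" "Z \<in> Ob" unfolding U_def Z_def using mf by auto
  define h where "h = pair (lam X p) (lam X q)"
  have h: "ar h" "dm h = X" "cd h = Z" unfolding h_def Z_def U_def using assms by auto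
  have "(M \<cdot> lam Z (m \<cdot> pair (ev A \<cdot> pair (pr1 U U \<cdot> pr1 Z NN) (pr2 Z NN)) (ev A \<cdot> pair (pr2 U U \<cdot> pr1 Z NN) (pr2 Z NN)))) \<cdot> h
      = (m \<cdot> pair (M \<cdot> pr1 U U) (M \<cdot> pr2 U U)) \<cdot> h"
    using P1_medial_univ unfolding U_def Z_def by simp
  then show ?thesis using assms h U mf Mf unfolding h_def by (simp add: Z_def U_def)
qed

lemma P1_swap_univ:
  defines "UU \<equiv> ex (ex A)"
  defines "W \<equiv> prd UU NN"
  shows "M \<cdot> lam UU (M \<cdot> lam W (dseq C A (idc UU))) = M \<cdot> lam UU (M \<cdot> lam W (dseq C A (idc UU) \<cdot> swapN C UU))"
proof -
  note mf Mf
  have U: "UU \<in> Ob" "W \<in> Ob" unfolding UU_def W_def using mf by auto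
  define L0 where "L0 = M \<cdot> lam UU (M \<cdot> lam W (dseq C A (idc UU)))"
  define R0 where "R0 = M \<cdot> lam UU (M \<cdot> lam W (dseq C A (idc UU) \<cdot> swapN C UU))"
  define a where "a = M \<cdot> (ev (ex A) \<cdot> pair (idc UU) (zero \<cdot> bang UU))"
  define e where "e = lam UU (ev (ex A) \<cdot> pair (pr1 UU NN) (succ \<cdot> pr2 UU NN))"
  have a: "ar a" "dm a = UU" "cd a = A" unfolding a_def using U mf Mf by (auto simp: UU_def)
  have e: "ar e" "dm e = UU" "cd e = UU" unfolding e_def using U mf Mf by (auto simp: UU_def)
  have L0n: "L0 = M \<cdot> lam UU (M \<cdot> ev (ex A))"
    unfolding L0_def using U mf Mf by (simp add: dseq_eq UU_def W_def)
  have L0: "ar L0" "dm L0 = UU" "cd L0 = A" unfolding L0n using U mf Mf by (auto simp: UU_def)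
  have "L0 = m \<cdot> pair a (M \<cdot> lam UU (M \<cdot> ev (ex A) \<cdot> pair (pr1 UU NN) (succ \<cdot> pr2 UU NN)))"
    unfolding L0n
    by (rule assoc_lam2[OF as mp]) (use U mf Mf in \<open>simp_all add: a_def UU_def\<close>)
  also have "M \<cdot> lam UU (M \<cdot> ev (ex A) \<cdot> pair (pr1 UU NN) (succ \<cdot> pr2 UU NN)) = L0 \<cdot> e"
    unfolding L0n e_def using U mf Mf by (simp add: UU_def)
  finally have L0e: "L0 = m \<cdot> pair a (L0 \<cdot> e)" .
  define B where "B = dseq C A (idc UU) \<cdot> swapN C UU"
  have B: "ar B" "dm B = prd W NN" "cd B = A" unfolding B_def using U mf Mf
    by (auto simp: dseq_eq swapN_eq UU_def W_def)
  have R0: "ar R0" "dm R0 = UU" "cd R0 = A" unfolding R0_def B_def[symmetric] using U mf Mf B by (auto simp: UU_def W_def)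
  have g: "M \<cdot> lam W B = m \<cdot> pair (B \<cdot> pair (idc W) (zero \<cdot> bang W)) (M \<cdot> lam W (B \<cdot> pair (pr1 W NN) (succ \<cdot> pr2 W NN)))"
    by (rule assoc_lam[OF as mp]) (use U mf Mf B in simp_all)
  have "R0 = M \<cdot> lam UU (m \<cdot> pair (B \<cdot> pair (idc W) (zero \<cdot> bang W)) (M \<cdot> lam W (B \<cdot> pair (pr1 W NN) (succ \<cdot> pr2 W NN))))"
    unfolding R0_def B_def[symmetric] g ..
  also have "\<dots> = m \<cdot> pair (M \<cdot> lam UU (B \<cdot> pair (idc W) (zero \<cdot> bang W))) (M \<cdot> lam UU (M \<cdot> lam W (B \<cdot> pair (pr1 W NN) (succ \<cdot> pr2 W NN))))"
    by (rule P1_medial) (use U mf Mf B in \<open>simp_all add: W_def\<close>)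
  also have "lam UU (B \<cdot> pair (idc W) (zero \<cdot> bang W)) = ev (ex A) \<cdot> pair (idc UU) (zero \<cdot> bang UU)"
    by (rule lam_unique[symmetric]) (use U mf Mf B in \<open>simp_all add: W_def UU_def B_def dseq_eq swapN_eq\<close>)
  also have "M \<cdot> lam UU (M \<cdot> lam W (B \<cdot> pair (pr1 W NN) (succ \<cdot> pr2 W NN))) = R0 \<cdot> e"
    unfolding R0_def e_def B_def using U mf Mf by (simp add: W_def UU_def dseq_eq swapN_eq)
  finally have R0e: "R0 = m \<cdot> pair a (R0 \<cdot> e)" unfolding a_def .
  have "L0 = R0" by (rule iter_unique[OF mp it a e U(1) L0 L0e[symmetric] R0 R0e[symmetric]])
  then show ?thesis unfolding L0_def R0_def .
qed

lemma P1_swap: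
  assumes x: "ar x" "dm x = X" "cd x = ex (ex A)" "X \<in> Ob"
  shows "M \<cdot> lam X (M \<cdot> lam (prd X NN) (dseq C A x)) = M \<cdot> lam X (M \<cdot> lam (prd X NN) (dseq C A x \<cdot> swapN C X))"
proof -
  note mf Mf
  define UU where "UU = ex (ex A)"
  define W where "W = prd UU NN"
  have U: "UU \<in> Ob" "W \<in> Ob" unfolding UU_def W_def using mf by auto
  have E: "(M \<cdot> lam UU (M \<cdot> lam W (dseq C A (idc UU)))) \<cdot> x = (M \<cdot> lam UU (M \<cdot> lam W (dseq C A (idc UU) \<cdot> swapN C UU))) \<cdot> x"
    using P1_swap_univ unfolding UU_def W_def by simp
  have l1: "lam (prd X NN) (dseq C A x) = ev (ex A) \<cdot> pair (x \<cdot> pr1 X NN) (pr2 X NN)"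
    by (rule lam_unique[symmetric]) (use x mf in \<open>simp_all add: dseq_eq\<close>)
  have "M \<cdot> lam X (M \<cdot> lam (prd X NN) (dseq C A x)) = (M \<cdot> lam UU (M \<cdot> lam W (dseq C A (idc UU)))) \<cdot> x"
    unfolding l1 using x U mf Mf by (simp add: dseq_eq UU_def W_def)
  also have "\<dots> = (M \<cdot> lam UU (M \<cdot> lam W (dseq C A (idc UU) \<cdot> swapN C UU))) \<cdot> x" by (rule E)
  also have "\<dots> = M \<cdot> lam X (M \<cdot> lam (prd X NN) (dseq C A x \<cdot> swapN C X))"
    using x U mf Mf by (simp add: dseq_eq swapN_eq UU_def W_def)
  finally show ?thesis .
qed

lemma P1_super: "supermidpoint C A M"
  unfolding supermidpoint_def
proof (intro conjI ballI)
  note mf Mf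
  show "A \<in> Ob" by (rule mf)
  show "M \<in> arr C (ex A) A" using Mf by (simp add: arr_def)
  fix X assume X: "X \<in> Ob"
  {
    fix x assume "x \<in> arr C X A"
    then have x: "ar x" "dm x = X" "cd x = A" by (auto simp: arr_def)
    show "M \<cdot> seq_const C X A x = x" using P1_const[OF x X] by simp
  }
  {
    fix x y assume "x \<in> arr C X A" "y \<in> arr C X A"
    then have x: "ar x" "dm x = X" "cd x = A" and y: "ar y" "dm y = X" "cd y = A" by (auto simp: arr_def)
    show "M \<cdot> seq_xy C X A x y = M \<cdot> seq_xy C X A y x"
      using P1_xy[OF x y X] P1_xy[OF y x X] mp_comm[of x y] x y by simp
  }
  {
    fix x assume "x \<in> arr C X (ex (ex A))"
    then have x: "ar x" "dm x = X" "cd x = ex (ex A)" by (auto simp: arr_def)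
    show "M \<cdot> lam X (M \<cdot> lam (prd X NN) (dseq C A x)) = M \<cdot> lam X (M \<cdot> lam (prd X NN) (dseq C A x \<cdot> swapN C X))"
      by (rule P1_swap[OF x X])
  }
  {
    fix x assume "x \<in> arr C X (ex A)"
    then have x: "ar x" "dm x = X" "cd x = ex A" by (auto simp: arr_def)
    have h: "ar (seq_head C X A x)" "dm (seq_head C X A x) = X" "cd (seq_head C X A x) = A"
      using x X mf by auto
    have s: "ar (M \<cdot> seq_shift C X A x)" "dm (M \<cdot> seq_shift C X A x) = X" "cd (M \<cdot> seq_shift C X A x) = A"
      using x X mf Mf by auto
    have "M \<cdot> seq_xy C X A (seq_head C X A x) (M \<cdot> seq_shift C X A x) = m \<cdot> pair (seq_head C X A x) (M \<cdot> seq_shift C X A x)"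
      using P1_xy[OF h s X] by simp
    also have "\<dots> = M \<cdot> x" using assoc_eq[OF as x X] x by simp
    finally show "M \<cdot> x = M \<cdot> seq_xy C X A (seq_head C X A x) (M \<cdot> seq_shift C X A x)" by simp
  }
qed

lemma P1_binop: "supermid_binop C A M = m"
proof -
  note mf Mf
  have "supermid_binop C A M = M \<cdot> lam (prd A A) (Sq A (pr1 A A) (pr2 A A))"
    unfolding supermid_binop_def by simp
  also have "\<dots> = m \<cdot> pair (pr1 A A) (pr2 A A)" by (rule P1_xy) (use mf in auto)
  also have "\<dots> = m" using mf by simp
  finally show ?thesis .
qed

end

lemma P1_exists_unique:
  assumes mp: "midpoint_obj C A m" and it: "iterative C A m"
  shows "\<exists>!M. assoc_inf_op C A m M"
proof -
  note mf = mp_facts[OF mp]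
  define U where "U = ex A"
  have U: "U \<in> Ob" unfolding U_def using mf by simp
  define a where "a = ev A \<cdot> pair (idc U) (zero \<cdot> bang U)"
  define e where "e = lam U (ev A \<cdot> pair (pr1 U NN) (succ \<cdot> pr2 U NN))"
  have a: "ar a" "dm a = U" "cd a = A" unfolding a_def using U mf by (auto simp: U_def)
  have e: "ar e" "dm e = U" "cd e = U" unfolding e_def using U mf by (auto simp: U_def)
  obtain u where u: "ar u" "dm u = U" "cd u = A" "m \<cdot> pair a (u \<cdot> e) = u"
    using iter_exists[OF mp it a e U] by blast
  have ex: "assoc_inf_op C A m u"
    unfolding assoc_inf_op_def
  proof (intro conjI ballI)
    show "u \<in> arr C (ex A) A" using u by (simp add: arr_def U_def)
    fix X x assume X: "X \<in> Ob" and "x \<in> arr C X (ex A)"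
    then have x: "ar x" "dm x = X" "cd x = ex A" by (auto simp: arr_def)
    have "u \<cdot> x = (m \<cdot> pair a (u \<cdot> e)) \<cdot> x" by (simp only: u(4))
    also have "\<dots> = m \<cdot> pair (seq_head C X A x) (u \<cdot> seq_shift C X A x)"
      using x X u(1-3) mf U by (simp add: a_def e_def U_def)
    finally show "u \<cdot> x = m \<cdot> pair (seq_head C X A x) (u \<cdot> seq_shift C X A x)" .
  qed
  have un: "M = u" if "assoc_inf_op C A m M" for M
  proof -
    note Mf = assoc_M[OF that]
    have i1: "idc U \<cdot> pr1 U NN = pr1 U NN" using U by simp
    have i2: "M \<cdot> idc U = M" using Mf U by (simp add: U_def)
    have "M = m \<cdot> pair a (M \<cdot> e)"
      using assoc_eq[OF that, of "idc U" U] U unfolding i1 i2 a_def e_def by (simp add: U_def)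
    then show ?thesis
      using iter_unique[OF mp it a e U, of M u] Mf u by (simp add: U_def)
  qed
  show ?thesis using ex un by blast
qed

lemma part1:
  assumes "iterative_midpoint C A m"
  shows "(\<exists>!M. assoc_inf_op C A m M) \<and>
            (\<forall>M. assoc_inf_op C A m M \<longrightarrow>
                 supermidpoint C A M \<and>
                 (cancellative C A m \<longrightarrow> cancellative_supermidpoint C A M))"
proof -
  have mp: "midpoint_obj C A m" and it: "iterative C A m"
    using assms unfolding iterative_midpoint_def by auto
  show ?thesis
  proof (intro conjI allI impI)
    show "\<exists>!M. assoc_inf_op C A m M" by (rule P1_exists_unique[OF mp it])
  next
    fix M assume as: "assoc_inf_op C A m M"
    show "supermidpoint C A M" by (rule P1_super[OF mp it as])
    assume "cancellative C A m"
    then show "cancellative_supermidpoint C A M"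
      unfolding cancellative_supermidpoint_def P1_binop[OF mp it as]
      using P1_super[OF mp it as] by simp
  qed
qed

end

context fpc
begin

declare pair_eta[simp]

lemma swap_inv: "X \<in> Ob \<Longrightarrow> swapN C X \<cdot> swapN C X = idc (prd (prd X NN) NN)"
  by (simp add: swapN_eq)

lemma orbit_comm:
  assumes "ar e" "dm e = Z" "cd e = Z" "Z \<in> Ob"
  shows "rec (idc Z) e \<cdot> pair (e \<cdot> pr1 Z NN) (pr2 Z NN) = e \<cdot> rec (idc Z) e"
proof -
  have "rec (idc Z) e \<cdot> pair (e \<cdot> pr1 Z NN) (pr2 Z NN) = rec e e"
    by (rule rec_unique) (use assms in simp_all)
  moreover have "e \<cdot> rec (idc Z) e = rec e e"
    by (rule rec_unique) (use assms in simp_all)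
  ultimately show ?thesis by simp
qed

context
  fixes A M
  assumes sm: "supermidpoint C A M"
begin

abbreviation "mm \<equiv> supermid_binop C A M"

lemma S0: "A \<in> Ob" "ar M" "dm M = ex A" "cd M = A"
  using sm unfolding supermidpoint_def arr_def by auto

lemma S_all: "X \<in> Ob \<Longrightarrow>
        (\<forall>x\<in>arr C X A. M \<cdot> seq_const C X A x = x) \<and>
        (\<forall>x\<in>arr C X A. \<forall>y\<in>arr C X A.
           M \<cdot> seq_xy C X A x y = M \<cdot> seq_xy C X A y x) \<and>
        (\<forall>x\<in>arr C X (ex (ex A)).
           M \<cdot> lam X (M \<cdot> lam (prd X NN) (dseq C A x)) =
           M \<cdot> lam X (M \<cdot> lam (prd X NN) (dseq C A x \<cdot> swapN C X))) \<and>
        (\<forall>x\<in>arr C X (ex A).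
           M \<cdot> x = M \<cdot> seq_xy C X A (seq_head C X A x) (M \<cdot> seq_shift C X A x))"
  using sm unfolding supermidpoint_def by blast

lemma S1: "ar x \<Longrightarrow> dm x = X \<Longrightarrow> cd x = A \<Longrightarrow> X \<in> Ob \<Longrightarrow> M \<cdot> lam X (x \<cdot> pr1 X NN) = x"
proof -
  assume a: "ar x" "dm x = X" "cd x = A" "X \<in> Ob"
  then have "x \<in> arr C X A" by (simp add: arr_def)
  then have "M \<cdot> seq_const C X A x = x" using S_all[OF a(4)] by blast
  then show ?thesis by simp
qed

lemma S2: "ar x \<Longrightarrow> dm x = X \<Longrightarrow> cd x = A \<Longrightarrow> ar y \<Longrightarrow> dm y = X \<Longrightarrow> cd y = A \<Longrightarrow> X \<in> Ob \<Longrightarrow>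
   M \<cdot> lam X (Sq A x y) = M \<cdot> lam X (Sq A y x)"
proof -
  assume a: "ar x" "dm x = X" "cd x = A" "ar y" "dm y = X" "cd y = A" "X \<in> Ob"
  then have "x \<in> arr C X A" "y \<in> arr C X A" by (simp_all add: arr_def)
  then have "M \<cdot> seq_xy C X A x y = M \<cdot> seq_xy C X A y x" using S_all[OF a(7)] by blast
  then show ?thesis by simp
qed

lemma S3: "ar x \<Longrightarrow> dm x = X \<Longrightarrow> cd x = ex (ex A) \<Longrightarrow> X \<in> Ob \<Longrightarrow>
           M \<cdot> lam X (M \<cdot> lam (prd X NN) (dseq C A x)) =
           M \<cdot> lam X (M \<cdot> lam (prd X NN) (dseq C A x \<cdot> swapN C X))"
proof -
  assume a: "ar x" "dm x = X" "cd x = ex (ex A)" "X \<in> Ob"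
  then have "x \<in> arr C X (ex (ex A))" by (simp add: arr_def)
  then show ?thesis using S_all[OF a(4)] by blast
qed

lemma S4: "ar x \<Longrightarrow> dm x = X \<Longrightarrow> cd x = ex A \<Longrightarrow> X \<in> Ob \<Longrightarrow>
           M \<cdot> x = M \<cdot> seq_xy C X A (seq_head C X A x) (M \<cdot> seq_shift C X A x)"
proof -
  assume a: "ar x" "dm x = X" "cd x = ex A" "X \<in> Ob"
  then have "x \<in> arr C X (ex A)" by (simp add: arr_def)
  then show ?thesis using S_all[OF a(4)] by blast
qed

lemma mm_ar: "ar mm" "dm mm = prd A A" "cd mm = A"
  unfolding supermid_binop_def using S0 by auto

lemma D1:
  assumes "ar x" "dm x = X" "cd x = A" "ar y" "dm y = X" "cd y = A" "X \<in> Ob"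
  shows "mm \<cdot> pair x y = M \<cdot> lam X (Sq A x y)"
  unfolding supermid_binop_def using assms S0
  apply simp
  apply (rule arg_cong[where f="\<lambda>t. M \<cdot> t"])
  apply (rule arg_cong[where f="lam X"])
  apply (rule NN_ext[where X=X])
  apply simp_all
  done

lemma D3:
  assumes "ar x" "dm x = X" "cd x = A" "X \<in> Ob"
  shows "mm \<cdot> pair x x = x"
proof -
  have "Sq A x x = x \<cdot> pr1 X NN"
    by (rule NN_ext[where X=X]) (use assms S0 in simp_all)
  then show ?thesis using D1[of x X x] S1[of x X] assms by simp
qed

lemma D2:
  assumes "ar x" "dm x = X" "cd x = A" "ar y" "dm y = X" "cd y = A" "X \<in> Ob"
  shows "mm \<cdot> pair x y = mm \<cdot> pair y x"
  using D1[of x X y] D1[of y X x] S2[of x X y] assms by simp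

lemma D4:
  assumes p: "ar p" "dm p = prd X NN" "cd p = A" and q: "ar q" "dm q = prd X NN" "cd q = A" and X: "X \<in> Ob"
  shows "M \<cdot> lam X (mm \<cdot> pair p q) = mm \<cdot> pair (M \<cdot> lam X p) (M \<cdot> lam X q)"
proof -
  note S0
  define Y where "Y = prd X NN"
  have Y: "Y \<in> Ob" unfolding Y_def using X by simp
  define dd where "dd = lam X (lam Y (Sq A p q))"
  have dd: "ar dd" "dm dd = X" "cd dd = ex (ex A)" unfolding dd_def Y_def using p q X S0 by auto
  have ds: "dseq C A dd = Sq A p q"
    unfolding dd_def Y_def using p q X S0 by (simp add: dseq_eq)
  have l: "M \<cdot> lam Y (Sq A p q) = mm \<cdot> pair p q"
    using D1[of p Y q] p q Y unfolding Y_def by simp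
  define E where "E = ev A \<cdot> pair (Sq (ex A) (lam X p) (lam X q) \<cdot> pr1 Y NN) (pr2 Y NN)"
  have E: "ar E" "dm E = prd Y NN" "cd E = A" unfolding E_def Y_def using p q X S0 by auto
  have Es: "E \<cdot> swapN C X = Sq A p q"
    by (rule NN_ext[where X=Y]) (use p q X S0 in \<open>simp_all add: E_def Y_def swapN_eq\<close>)
  have "E = E \<cdot> (swapN C X \<cdot> swapN C X)" using swap_inv[OF X] E by (simp add: Y_def)
  also have "\<dots> = (E \<cdot> swapN C X) \<cdot> swapN C X" using E X by (simp add: swapN_eq Y_def)
  finally have E2: "E = Sq A p q \<cdot> swapN C X" unfolding Es .
  have lr: "lam Y (Sq A p q \<cdot> swapN C X) = Sq (ex A) (lam X p) (lam X q)"
    by (rule lam_unique[symmetric]) (use p q X S0 E2 E in \<open>simp_all add: E_def Y_def swapN_eq\<close>)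
  have MS: "M \<cdot> Sq (ex A) (lam X p) (lam X q) = Sq A (M \<cdot> lam X p) (M \<cdot> lam X q)"
    by (rule NN_ext[where X=X]) (use p q X S0 in simp_all)
  have "M \<cdot> lam X (mm \<cdot> pair p q) = M \<cdot> lam X (M \<cdot> lam Y (dseq C A dd))"
    unfolding ds l ..
  also have "\<dots> = M \<cdot> lam X (M \<cdot> lam Y (dseq C A dd \<cdot> swapN C X))"
    using S3[OF dd X] unfolding Y_def .
  also have "\<dots> = M \<cdot> lam X (Sq A (M \<cdot> lam X p) (M \<cdot> lam X q))"
    unfolding ds lr MS ..
  also have "\<dots> = mm \<cdot> pair (M \<cdot> lam X p) (M \<cdot> lam X q)"
    using D1[of "M \<cdot> lam X p" X "M \<cdot> lam X q"] p q X S0 by simp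
  finally show ?thesis .
qed

lemma D5:
  assumes x: "ar x" "dm x = X" "cd x = A" and y: "ar y" "dm y = X" "cd y = A"
    and z: "ar z" "dm z = X" "cd z = A" and w: "ar w" "dm w = X" "cd w = A" and X: "X \<in> Ob"
  shows "mm \<cdot> pair (mm \<cdot> pair x y) (mm \<cdot> pair z w) = mm \<cdot> pair (mm \<cdot> pair x z) (mm \<cdot> pair y w)"
proof -
  note S0 mm_ar
  have pq: "mm \<cdot> pair (Sq A x z) (Sq A y w) = Sq A (mm \<cdot> pair x y) (mm \<cdot> pair z w)"
    by (rule NN_ext[where X=X]) (use x y z w X S0 mm_ar in simp_all)
  have "mm \<cdot> pair (mm \<cdot> pair x y) (mm \<cdot> pair z w) = M \<cdot> lam X (Sq A (mm \<cdot> pair x y) (mm \<cdot> pair z w))"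
    by (rule D1) (use x y z w X S0 mm_ar in simp_all)
  also have "\<dots> = M \<cdot> lam X (mm \<cdot> pair (Sq A x z) (Sq A y w))" unfolding pq ..
  also have "\<dots> = mm \<cdot> pair (M \<cdot> lam X (Sq A x z)) (M \<cdot> lam X (Sq A y w))"
    by (rule D4) (use x y z w X S0 mm_ar in simp_all)
  also have "M \<cdot> lam X (Sq A x z) = mm \<cdot> pair x z" by (rule D1[symmetric]) (use x y z w X in simp_all)
  also have "M \<cdot> lam X (Sq A y w) = mm \<cdot> pair y w" by (rule D1[symmetric]) (use x y z w X in simp_all)
  finally show ?thesis .
qed

lemma D_mid: "midpoint_obj C A mm"
  unfolding midpoint_obj_def
proof (intro conjI ballI)
  show "A \<in> Ob" using S0 by simp
  show "mm \<in> arr C (prd A A) A" using mm_ar by (simp add: arr_def)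
  fix X x y z w assume X: "X \<in> Ob" and "x \<in> arr C X A" "y \<in> arr C X A" "z \<in> arr C X A" "w \<in> arr C X A"
  then have x: "ar x" "dm x = X" "cd x = A" and y: "ar y" "dm y = X" "cd y = A"
    and z: "ar z" "dm z = X" "cd z = A" and w: "ar w" "dm w = X" "cd w = A" by (auto simp: arr_def)
  show "mm \<cdot> pair x x = x" by (rule D3[OF x X])
  show "mm \<cdot> pair x y = mm \<cdot> pair y x" by (rule D2[OF x y X])
  show "mm \<cdot> pair (mm \<cdot> pair x y) (mm \<cdot> pair z w) = mm \<cdot> pair (mm \<cdot> pair x z) (mm \<cdot> pair y w)"
    by (rule D5[OF x y z w X])
qed

lemma D_iter:
  assumes canc: "cancellative C A mm"
  shows "iterative C A mm"
  unfolding iterative_def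
proof (intro ballI)
  note S0 mm_ar
  fix Z c assume Z: "Z \<in> Ob" and "c \<in> arr C Z (prd A Z)"
  then have c: "ar c" "dm c = Z" "cd c = prd A Z" by (auto simp: arr_def)
  define a where "a = pr1 A Z \<cdot> c"
  define e where "e = pr2 A Z \<cdot> c"
  have a: "ar a" "dm a = Z" "cd a = A" unfolding a_def using c Z S0 by auto
  have e: "ar e" "dm e = Z" "cd e = Z" unfolding e_def using c Z S0 by auto
  have cr: "mm \<cdot> (cross C (idc A) u \<cdot> c) = mm \<cdot> pair a (u \<cdot> e)" if "ar u" "dm u = Z" "cd u = A" for u
    unfolding a_def e_def using that c Z S0 by simp
  define Orb where "Orb = rec (idc Z) e"
  have Orb: "ar Orb" "dm Orb = prd Z NN" "cd Orb = Z" unfolding Orb_def using e Z by auto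
  have oc: "Orb \<cdot> pair (e \<cdot> pr1 Z NN) (pr2 Z NN) = e \<cdot> Orb" unfolding Orb_def by (rule orbit_comm[OF e Z])
  define s where "s = lam Z (a \<cdot> Orb)"
  have s: "ar s" "dm s = Z" "cd s = ex A" unfolding s_def using a Orb Z by auto
  have Ms: "ar (M \<cdot> s)" "dm (M \<cdot> s) = Z" "cd (M \<cdot> s) = A" using s S0 by auto
  have hs: "seq_head C Z A s = a" unfolding s_def Orb_def using a e Z S0 by simp
  have ss: "seq_shift C Z A s = s \<cdot> e" unfolding s_def using a e Z S0 Orb oc by (simp add: Orb_def)
  have "M \<cdot> s = M \<cdot> seq_xy C Z A (seq_head C Z A s) (M \<cdot> seq_shift C Z A s)" by (rule S4[OF s Z])
  also have "\<dots> = mm \<cdot> pair (seq_head C Z A s) (M \<cdot> seq_shift C Z A s)"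
    unfolding seq_xy_eq by (rule D1[symmetric]) (use s Z S0 in simp_all)
  also have "\<dots> = mm \<cdot> pair a ((M \<cdot> s) \<cdot> e)" unfolding hs ss using s e S0 by simp
  finally have Mse: "M \<cdot> s = mm \<cdot> pair a ((M \<cdot> s) \<cdot> e)" .
  have uniq: "u = M \<cdot> s" if u: "ar u" "dm u = Z" "cd u = A" and ue: "mm \<cdot> pair a (u \<cdot> e) = u" for u
  proof -
    define y where "y = lam Z (u \<cdot> Orb)"
    have y: "ar y" "dm y = Z" "cd y = ex A" unfolding y_def using u Orb Z by auto
    define Y' where "Y' = M \<cdot> lam Z (u \<cdot> (e \<cdot> Orb))"
    have Y': "ar Y'" "dm Y' = Z" "cd Y' = A" unfolding Y'_def using u Orb e Z S0 by auto
    have i: "u \<cdot> Orb = mm \<cdot> pair (a \<cdot> Orb) (u \<cdot> (e \<cdot> Orb))"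
    proof -
      have "u \<cdot> Orb = (mm \<cdot> pair a (u \<cdot> e)) \<cdot> Orb" by (simp only: ue)
      also have "\<dots> = mm \<cdot> pair (a \<cdot> Orb) (u \<cdot> (e \<cdot> Orb))" using u a e Orb mm_ar by simp
      finally show ?thesis .
    qed
    have hy: "seq_head C Z A y = u" unfolding y_def Orb_def using u e Z S0 by simp
    have sy: "M \<cdot> seq_shift C Z A y = Y'" unfolding y_def Y'_def Orb_def using u e Z S0 by simp
    have "M \<cdot> y = M \<cdot> seq_xy C Z A (seq_head C Z A y) (M \<cdot> seq_shift C Z A y)" by (rule S4[OF y Z])
    also have "\<dots> = mm \<cdot> pair u Y'" unfolding hy sy seq_xy_eq
      by (rule D1[symmetric]) (use u Y' Z in simp_all)
    finally have ii: "M \<cdot> y = mm \<cdot> pair u Y'" .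
    have "M \<cdot> y = M \<cdot> lam Z (mm \<cdot> pair (a \<cdot> Orb) (u \<cdot> (e \<cdot> Orb)))" unfolding y_def i ..
    also have "\<dots> = mm \<cdot> pair (M \<cdot> s) Y'" unfolding s_def Y'_def
      by (rule D4) (use u a e Orb Z S0 in simp_all)
    finally have iii: "M \<cdot> y = mm \<cdot> pair (M \<cdot> s) Y'" .
    have "mm \<cdot> pair Y' u = mm \<cdot> pair Y' (M \<cdot> s)"
      using ii iii D2[OF u(1) _ u(3) Y'(1) _ Y'(3) Z] D2[OF Ms(1) _ Ms(3) Y'(1) _ Y'(3) Z] u Y' Ms by simp
    moreover have "Y' \<in> arr C Z A" "u \<in> arr C Z A" "M \<cdot> s \<in> arr C Z A" using Y' u Ms by (auto simp: arr_def)
    ultimately show ?thesis using canc Z unfolding cancellative_def by blast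
  qed
  show "\<exists>!u. u \<in> arr C Z A \<and> mm \<cdot> (cross C (idc A) u \<cdot> c) = u"
  proof (rule ex1I[of _ "M \<cdot> s"])
    show "M \<cdot> s \<in> arr C Z A \<and> mm \<cdot> (cross C (idc A) (M \<cdot> s) \<cdot> c) = M \<cdot> s"
      using Ms cr[OF Ms] Mse by (simp add: arr_def)
  next
    fix u assume "u \<in> arr C Z A \<and> mm \<cdot> (cross C (idc A) u \<cdot> c) = u"
    then have u: "ar u" "dm u = Z" "cd u = A" and "mm \<cdot> (cross C (idc A) u \<cdot> c) = u" by (auto simp: arr_def)
    then have "mm \<cdot> pair a (u \<cdot> e) = u" using cr[OF u] by simp
    then show "u = M \<cdot> s" by (rule uniq[OF u])
  qed
qed

end

lemma part2:
  assumes "cancellative_supermidpoint C A M"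
  shows "m_convex_body C A (supermid_binop C A M)"
proof -
  have sm: "supermidpoint C A M" and canc: "cancellative C A (supermid_binop C A M)"
    using assms unfolding cancellative_supermidpoint_def by auto
  show ?thesis unfolding m_convex_body_def using D_mid[OF sm] canc D_iter[OF sm canc] by simp
qed

end

theorem mainTheorem2:
  fixes C :: "('o, 'a) fpcat"
  assumes "fp_nno_cat C"
  shows "(\<forall>A m. iterative_midpoint C A m \<longrightarrow>
            (\<exists>!M. assoc_inf_op C A m M) \<and>
            (\<forall>M. assoc_inf_op C A m M \<longrightarrow>
                 supermidpoint C A M \<and>
                 (cancellative C A m \<longrightarrow> cancellative_supermidpoint C A M)))
       \<and> (\<forall>A M. cancellative_supermidpoint C A M \<longrightarrow>
                 m_convex_body C A (supermid_binop C A M))"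
proof -
  interpret F: fpc C by (rule fpc.intro) (rule assms)
  show ?thesis using F.part1 F.part2 by blast
qed

end
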